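(* Let $\mu,\nu$ be Borel probability measures on $\mathbb{R}^d$ such that: (a) there is a bounded connected open Lipschitz domain $\Omega\subset B(0,1)$ with $\mu(dx)=\rho_\mu(x)\mathbf 1_\Omega(x)dx$ and $0<\underline\lambda_\mu\le\rho_\mu\le\overline\lambda_\mu<\infty$ a.e. on $\Omega$; (b) $\nu\ll\mathrm{Leb}$, $\operatorname{spt}\nu\subseteq B(0,1)$, $d\nu/dy\le\overline\lambda_\nu<\infty$ on $\operatorname{spt}\nu$; (c) the Monge map $T=\nabla\varphi$ is $L$-Lipschitz. Let $C_{\mathrm{val}}$ be a constant with $C_{\mathrm{val}}^{-1}\varepsilon^{2/(2+d)}\le\Delta_\varepsilon\le C_{\mathrm{val}}\varepsilon^{2/(2+d)}$ for all $\varepsilon\in(0,1]$. Then for every $t>0$ and $\varepsilon\in(0,1]$, $$\pi_\varepsilon\big(\{(x,y):\|y-T(x)\|\ge t\}\big)\le\frac{2LC_{\mathrm{val}}}{t^2}\varepsilon^{\frac{2}{d+2}}.$$ Equivalently, for every $\eta\in(0,1)$, $$\pi_\varepsilon\Big(\big\{(x,y):\|y-T(x)\|\le\sqrt{2LC_{\mathrm{val}}}\,\eta^{-1/2}\varepsilon^{\frac1{d+2}}\big\}\Big)\ge1-\eta.$$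
   Context: Cost $c(x,y)=\frac12\|x-y\|^2$, $P=\mu\otimes\nu$, $\mathrm{OT}(\mu,\nu)=\inf_{\pi\in\Pi(\mu,\nu)}\int c\,d\pi$; $T=\nabla\varphi$ ($\varphi$ convex) is the Brenier optimal map with $T_\#\mu=\nu$. For $\varepsilon>0$, $\mathrm{QOT}_\varepsilon(\mu,\nu)=\inf_{\pi\in\Pi(\mu,\nu),\pi\ll P}\{\int c\,d\pi+\frac\varepsilon2\|\frac{d\pi}{dP}\|^2_{L^2(P)}\}$, $\pi_\varepsilon$ its unique optimizer, $\Delta_\varepsilon=\mathrm{QOT}_\varepsilon(\mu,\nu)-\mathrm{OT}(\mu,\nu)$. *)

theory Defs
  imports "HOL-Probability.Probability"
begin

definition qcost :: "'a::euclidean_space \<Rightarrow> 'a \<Rightarrow> real" where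
  "qcost x y = (1/2) * (norm (x - y))\<^sup>2"

definition couplings :: "'a measure \<Rightarrow> 'b measure \<Rightarrow> ('a \<times> 'b) measure set" where
  "couplings \<mu> \<nu> = {\<pi>. sets \<pi> = sets (\<mu> \<Otimes>\<^sub>M \<nu>) \<and> distr \<pi> \<mu> fst = \<mu> \<and> distr \<pi> \<nu> snd = \<nu>}"

definition OT :: "'a::euclidean_space measure \<Rightarrow> 'a measure \<Rightarrow> ennreal" where
  "OT \<mu> \<nu> = (INF \<pi>\<in>couplings \<mu> \<nu>. \<integral>\<^sup>+ z. ennreal (qcost (fst z) (snd z)) \<partial>\<pi>)"

definition qot_obj :: "real \<Rightarrow> 'a::euclidean_space measure \<Rightarrow> 'a measure \<Rightarrow> ('a \<times> 'a) measure \<Rightarrow> ennreal" where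
  "qot_obj \<epsilon> \<mu> \<nu> \<pi> =
     (\<integral>\<^sup>+ z. ennreal (qcost (fst z) (snd z)) \<partial>\<pi>)
     + ennreal (\<epsilon> / 2) * (\<integral>\<^sup>+ z. (RN_deriv (\<mu> \<Otimes>\<^sub>M \<nu>) \<pi> z)\<^sup>2 \<partial>(\<mu> \<Otimes>\<^sub>M \<nu>))"

definition qot_admissible :: "'a::euclidean_space measure \<Rightarrow> 'a measure \<Rightarrow> ('a \<times> 'a) measure set" where
  "qot_admissible \<mu> \<nu> = {\<pi> \<in> couplings \<mu> \<nu>. absolutely_continuous (\<mu> \<Otimes>\<^sub>M \<nu>) \<pi>}"

definition QOT :: "real \<Rightarrow> 'a::euclidean_space measure \<Rightarrow> 'a measure \<Rightarrow> ennreal" where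
  "QOT \<epsilon> \<mu> \<nu> = (INF \<pi>\<in>qot_admissible \<mu> \<nu>. qot_obj \<epsilon> \<mu> \<nu> \<pi>)"

definition is_qot_optimizer :: "real \<Rightarrow> 'a::euclidean_space measure \<Rightarrow> 'a measure \<Rightarrow> ('a \<times> 'a) measure \<Rightarrow> bool" where
  "is_qot_optimizer \<epsilon> \<mu> \<nu> \<pi> \<longleftrightarrow> \<pi> \<in> qot_admissible \<mu> \<nu> \<and> qot_obj \<epsilon> \<mu> \<nu> \<pi> = QOT \<epsilon> \<mu> \<nu>"

text \<open>Delta_eps = QOT_eps - OT (both finite under the standing assumptions).\<close>
definition Delta :: "real \<Rightarrow> 'a::euclidean_space measure \<Rightarrow> 'a measure \<Rightarrow> real" where
  "Delta \<epsilon> \<mu> \<nu> = enn2real (QOT \<epsilon> \<mu> \<nu>) - enn2real (OT \<mu> \<nu>)"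

definition spt :: "'a::metric_space measure \<Rightarrow> 'a set" where
  "spt M = {x. \<forall>r>0. emeasure M (ball x r) > 0}"

definition lipschitz_domain :: "'a::euclidean_space set \<Rightarrow> bool" where
  "lipschitz_domain \<Omega> \<longleftrightarrow>
    (\<forall>p\<in>frontier \<Omega>. \<exists>r>0. \<exists>e g M. norm e = 1 \<and> M-lipschitz_on {v. v \<bullet> e = 0} g \<and>
        \<Omega> \<inter> ball p r = {x \<in> ball p r. x \<bullet> e < g (x - (x \<bullet> e) *\<^sub>R e)})"

end

theory Submission
  imports Defs "HOL-Probability.Probability"
begin

lemma line_deriv:
  fixes \<phi> :: "'a::euclidean_space \<Rightarrow> real"
  assumes "\<And>x. (\<phi> has_derivative (\<lambda>h. T x \<bullet> h)) (at x)"
  shows "((\<lambda>s. \<phi> (x + s *\<^sub>R v)) has_real_derivative (T (x + s *\<^sub>R v) \<bullet> v)) (at s)"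
proof -
  have "((\<lambda>s. x + s *\<^sub>R v) has_derivative (\<lambda>h. h *\<^sub>R v)) (at s)"
    by (auto intro!: derivative_eq_intros)
  from has_derivative_compose[OF this assms]
  have "((\<lambda>s. \<phi> (x + s *\<^sub>R v)) has_derivative (\<lambda>h. T (x + s *\<^sub>R v) \<bullet> (h *\<^sub>R v))) (at s)" .
  moreover have "(\<lambda>h. T (x + s *\<^sub>R v) \<bullet> (h *\<^sub>R v)) = (*) (T (x + s *\<^sub>R v) \<bullet> v)"
    by (rule ext) simp
  ultimately show ?thesis unfolding has_field_derivative_def by simp
qed

lemma grad_ineq:
  fixes \<phi> :: "'a::euclidean_space \<Rightarrow> real"
  assumes cvx: "convex_on UNIV \<phi>" and d: "\<And>x. (\<phi> has_derivative (\<lambda>h. T x \<bullet> h)) (at x)"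
  shows "\<phi> x + T x \<bullet> (z - x) \<le> \<phi> z"
proof -
  define g where "g s = \<phi> (x + s *\<^sub>R (z - x))" for s
  have "convex_on UNIV g"
    unfolding convex_on_def g_def
  proof (intro conjI ballI allI impI)
    fix u w :: real and a b :: real
    assume t: "0 \<le> u" "0 \<le> w" "u + w = 1"
    have "x + (u *\<^sub>R a + w *\<^sub>R b) *\<^sub>R (z - x) = u *\<^sub>R (x + a *\<^sub>R (z - x)) + w *\<^sub>R (x + b *\<^sub>R (z - x))"
      using t by (simp add: algebra_simps) (metis scaleR_add_left scaleR_one)
    then show "\<phi> (x + (u *\<^sub>R a + w *\<^sub>R b) *\<^sub>R (z - x)) \<le> u * \<phi> (x + a *\<^sub>R (z - x)) + w * \<phi> (x + b *\<^sub>R (z - x))"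
      using cvx t unfolding convex_on_def by auto
  qed auto
  moreover have "(g has_real_derivative (T x \<bullet> (z - x))) (at 0 within UNIV)"
    using line_deriv[OF d, of x "z - x" 0] unfolding g_def by simp
  ultimately have "g 1 - g 0 \<ge> (T x \<bullet> (z - x)) * (1 - 0)"
    by (intro convex_on_imp_above_tangent) auto
  then show ?thesis unfolding g_def by simp
qed

lemma descent:
  fixes \<phi> :: "'a::euclidean_space \<Rightarrow> real"
  assumes d: "\<And>x. (\<phi> has_derivative (\<lambda>h. T x \<bullet> h)) (at x)"
    and lip: "L-lipschitz_on UNIV T"
  shows "\<phi> (x + v) \<le> \<phi> x + T x \<bullet> v + L / 2 * (norm v)\<^sup>2"
proof -
  define g where "g s = \<phi> (x + s *\<^sub>R v) - s * (T x \<bullet> v) - L / 2 * s\<^sup>2 * (norm v)\<^sup>2" for s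
  have "g 1 \<le> g 0"
  proof (rule DERIV_nonpos_imp_nonincreasing[of 0 1 g])
    fix s :: real assume s: "0 \<le> s" "s \<le> 1"
    have D: "(g has_real_derivative (T (x + s *\<^sub>R v) \<bullet> v - T x \<bullet> v - L / 2 * (2 * s) * (norm v)\<^sup>2)) (at s)"
      unfolding g_def
      by (auto intro!: derivative_eq_intros line_deriv[OF d] simp: power2_eq_square)
    have "T (x + s *\<^sub>R v) \<bullet> v - T x \<bullet> v = (T (x + s *\<^sub>R v) - T x) \<bullet> v"
      by (simp add: inner_diff_left)
    also have "\<dots> \<le> norm (T (x + s *\<^sub>R v) - T x) * norm v"
      by (rule norm_cauchy_schwarz)
    also have "norm (T (x + s *\<^sub>R v) - T x) * norm v \<le> L * norm (s *\<^sub>R v) * norm v"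
    proof -
      have "norm (T (x + s *\<^sub>R v) - T x) \<le> L * norm (s *\<^sub>R v)"
        using lip unfolding lipschitz_on_def by (metis UNIV_I dist_norm add_diff_cancel_left')
      then show ?thesis by (simp add: mult_right_mono)
    qed
    also have "\<dots> = L / 2 * (2 * s) * (norm v)\<^sup>2"
      using s by (simp add: power2_eq_square)
    finally show "\<exists>y. (g has_real_derivative y) (at s) \<and> y \<le> 0"
      using D by (intro exI[of _ "T (x + s *\<^sub>R v) \<bullet> v - T x \<bullet> v - L / 2 * (2 * s) * (norm v)\<^sup>2"]) auto
  qed simp
  then show ?thesis unfolding g_def by simp
qed


lemma sup_lipschitz:
  fixes f :: "'b \<Rightarrow> 'a::metric_space \<Rightarrow> real"
  assumes K: "K \<noteq> {}" and lip: "\<And>z. z \<in> K \<Longrightarrow> R-lipschitz_on UNIV (f z)"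
    and bdd: "\<And>y. bdd_above ((\<lambda>z. f z y) ` K)"
  shows "R-lipschitz_on UNIV (\<lambda>y. SUP z\<in>K. f z y)"
proof (rule lipschitz_onI)
  obtain z0 where "z0 \<in> K" using K by auto
  then show "0 \<le> R" using lip lipschitz_on_nonneg by blast
  have one: "(SUP z\<in>K. f z y) \<le> (SUP z\<in>K. f z y') + R * dist y y'" for y y'
  proof (rule cSUP_least[OF K])
    fix z assume z: "z \<in> K"
    have "dist (f z y) (f z y') \<le> R * dist y y'"
      using lip[OF z] unfolding lipschitz_on_def by auto
    then have "f z y \<le> f z y' + R * dist y y'" by (simp add: dist_real_def)
    also have "f z y' \<le> (SUP z\<in>K. f z y')" by (rule cSUP_upper[OF z bdd])
    finally show "f z y \<le> (SUP z\<in>K. f z y') + R * dist y y'" by simp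
  qed
  fix y y' :: 'a
  show "dist (SUP z\<in>K. f z y) (SUP z\<in>K. f z y') \<le> R * dist y y'"
    using one[of y y'] one[of y' y] by (simp add: dist_real_def dist_commute abs_le_iff)
qed

lemma integrable_cont:
  fixes f :: "'b::topological_space \<Rightarrow> real"
  assumes fin: "finite_measure M" and s: "sets M = sets borel" and c: "continuous_on UNIV f"
    and K: "compact K" and ae: "AE x in M. x \<in> K"
  shows "integrable M f"
proof -
  have "compact (f ` K)" by (rule compact_continuous_image[OF continuous_on_subset[OF c] K]) simp
  then obtain B where B: "\<forall>x\<in>K. norm (f x) \<le> B"
    using compact_imp_bounded bounded_iff by (metis image_eqI)
  have m: "f \<in> borel_measurable M"
    by (subst measurable_cong_sets[OF s refl]) (rule borel_measurable_continuous_onI[OF c])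
  show ?thesis
    by (rule finite_measure.integrable_const_bound[OF fin _ m, of B]) (use ae B in auto)
qed


lemma psi_gap:
  fixes \<phi> :: "'a::euclidean_space \<Rightarrow> real"
  assumes cvx: "convex_on UNIV \<phi>" and d: "\<And>x. (\<phi> has_derivative (\<lambda>h. T x \<bullet> h)) (at x)"
    and lip: "L-lipschitz_on UNIV T" and Lpos: "L > 0"
    and R: "R = 1 + 2 * M / L"
    and x: "norm x \<le> 1" and Tx: "norm (T x) \<le> M" and y: "norm y \<le> M"
    and bdd: "\<And>y. bdd_above ((\<lambda>z. z \<bullet> y - \<phi> z) ` cball 0 R)"
  shows "x \<bullet> y - \<phi> x + (norm (y - T x))\<^sup>2 / (2 * L) \<le> (SUP z\<in>cball 0 R. z \<bullet> y - \<phi> z)"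
proof -
  define w where "w = y - T x"
  define v where "v = (1 / L) *\<^sub>R w"
  have "norm v = norm w / L" unfolding v_def using Lpos by simp
  also have "norm w \<le> 2 * M" unfolding w_def using norm_triangle_ineq4[of y "T x"] Tx y by simp
  then have "norm w / L \<le> 2 * M / L" using Lpos by (simp add: divide_right_mono)
  finally have "norm (x + v) \<le> R" unfolding R using x norm_triangle_ineq[of x v] by simp
  then have zin: "x + v \<in> cball 0 R" by simp
  have desc: "\<phi> (x + v) \<le> \<phi> x + T x \<bullet> v + L / 2 * (norm v)\<^sup>2"
    by (rule descent[OF d lip])
  have e1: "v \<bullet> y - T x \<bullet> v = (norm w)\<^sup>2 / L"
  proof -
    have "v \<bullet> y - T x \<bullet> v = v \<bullet> w" by (simp add: w_def inner_diff_right inner_commute)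
    also have "\<dots> = (norm w)\<^sup>2 / L" by (simp add: v_def power2_norm_eq_inner)
    finally show ?thesis .
  qed
  have e2: "L / 2 * (norm v)\<^sup>2 = (norm w)\<^sup>2 / (2 * L)"
    unfolding v_def using Lpos by (simp add: power2_eq_square field_simps)
  have "x \<bullet> y - \<phi> x + (norm w)\<^sup>2 / (2 * L) = x \<bullet> y - \<phi> x + (v \<bullet> y - T x \<bullet> v) - L / 2 * (norm v)\<^sup>2"
    using e1 e2 Lpos by (simp add: field_simps)
  also have "\<dots> \<le> (x + v) \<bullet> y - \<phi> (x + v)"
    using desc by (simp add: inner_add_left)
  also have "\<dots> \<le> (SUP z\<in>cball 0 R. z \<bullet> y - \<phi> z)"
    by (rule cSUP_upper[OF zin bdd])
  finally show ?thesis unfolding w_def .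
qed

lemma psi_upper:
  fixes \<phi> :: "'a::euclidean_space \<Rightarrow> real"
  assumes cvx: "convex_on UNIV \<phi>" and d: "\<And>x. (\<phi> has_derivative (\<lambda>h. T x \<bullet> h)) (at x)"
    and R: "R \<ge> 0"
  shows "(SUP z\<in>cball 0 R. z \<bullet> T x - \<phi> z) \<le> x \<bullet> T x - \<phi> x"
proof (rule cSUP_least)
  show "cball 0 R \<noteq> {}" using R by auto
  fix z :: 'a
  have "\<phi> x + T x \<bullet> (z - x) \<le> \<phi> z" by (rule grad_ineq[OF cvx d])
  then show "z \<bullet> T x - \<phi> z \<le> x \<bullet> T x - \<phi> x"
    by (simp add: inner_diff_right inner_commute)
qed

lemma psi_bdd:
  fixes \<phi> :: "'a::euclidean_space \<Rightarrow> real"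
  assumes cvx: "convex_on UNIV \<phi>" and d: "\<And>x. (\<phi> has_derivative (\<lambda>h. T x \<bullet> h)) (at x)"
  shows "bdd_above ((\<lambda>z. z \<bullet> y - \<phi> z) ` cball 0 R)"
proof (rule bdd_aboveI2)
  fix z :: 'a assume z: "z \<in> cball 0 R"
  have g: "\<phi> 0 + T 0 \<bullet> (z - 0) \<le> \<phi> z" by (rule grad_ineq[OF cvx d])
  have "z \<bullet> y \<le> norm z * norm y" by (rule norm_cauchy_schwarz)
  also have "\<dots> \<le> R * norm y" using z by (simp add: mult_right_mono)
  finally have a: "z \<bullet> y \<le> R * norm y" .
  have "- (T 0 \<bullet> z) \<le> norm (T 0) * norm z"
    using norm_cauchy_schwarz[of "- T 0" z] by simp
  also have "\<dots> \<le> norm (T 0) * R" using z by (simp add: mult_left_mono)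
  finally have b: "- (T 0 \<bullet> z) \<le> norm (T 0) * R" .
  show "z \<bullet> y - \<phi> z \<le> R * norm y - \<phi> 0 + norm (T 0) * R"
    using a b g by simp
qed

lemma psi_lip:
  fixes \<phi> :: "'a::euclidean_space \<Rightarrow> real"
  assumes cvx: "convex_on UNIV \<phi>" and d: "\<And>x. (\<phi> has_derivative (\<lambda>h. T x \<bullet> h)) (at x)"
    and R: "R \<ge> 0"
  shows "continuous_on UNIV (\<lambda>y. SUP z\<in>cball 0 R. z \<bullet> y - \<phi> z)"
proof -
  have "R-lipschitz_on UNIV (\<lambda>y. SUP z\<in>cball 0 R. z \<bullet> y - \<phi> z)"
  proof (rule sup_lipschitz)
    show "cball (0::'a) R \<noteq> {}" using R by auto
    show "bdd_above ((\<lambda>z. z \<bullet> y - \<phi> z) ` cball 0 R)" for y by (rule psi_bdd[OF cvx d])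
    fix z :: 'a assume z: "z \<in> cball 0 R"
    show "R-lipschitz_on UNIV (\<lambda>y. z \<bullet> y - \<phi> z)"
    proof (rule lipschitz_onI)
      fix a b :: 'a
      have "dist (z \<bullet> a - \<phi> z) (z \<bullet> b - \<phi> z) = \<bar>z \<bullet> (a - b)\<bar>"
        by (simp add: dist_real_def inner_diff_right)
      also have "\<dots> \<le> norm z * norm (a - b)" by (rule Cauchy_Schwarz_ineq2)
      also have "\<dots> \<le> R * dist a b" using z by (simp add: dist_norm mult_right_mono)
      finally show "dist (z \<bullet> a - \<phi> z) (z \<bullet> b - \<phi> z) \<le> R * dist a b" .
    qed (rule R)
  qed
  then show ?thesis by (rule lipschitz_on_continuous_on)
qed


lemma core:
  fixes \<mu> \<nu> :: "'a::euclidean_space measure" and \<pi> :: "('a \<times> 'a) measure"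
    and \<phi> :: "'a \<Rightarrow> real" and T :: "'a \<Rightarrow> 'a"
  assumes sm: "sets \<mu> = sets borel" and sn: "sets \<nu> = sets borel"
    and pm: "prob_space \<mu>"
    and supp: "AE x in \<mu>. x \<in> cball 0 1"
    and cvx: "convex_on UNIV \<phi>" and d: "\<And>x. (\<phi> has_derivative (\<lambda>h. T x \<bullet> h)) (at x)"
    and push: "distr \<mu> borel T = \<nu>" and lip: "L-lipschitz_on UNIV T" and Lpos: "L > 0"
    and pi: "\<pi> \<in> couplings \<mu> \<nu>"
  shows "integrable \<pi> (\<lambda>z. qcost (fst z) (snd z))"
    "integrable \<mu> (\<lambda>x. qcost x (T x))"
    "integrable \<pi> (\<lambda>z. (norm (snd z - T (fst z)))\<^sup>2)"
    "(\<integral>z. (norm (snd z - T (fst z)))\<^sup>2 \<partial>\<pi>) / (2 * L)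
       \<le> (\<integral>z. qcost (fst z) (snd z) \<partial>\<pi>) - (\<integral>x. qcost x (T x) \<partial>\<mu>)"
proof -
  have sp: "sets \<pi> = sets (\<mu> \<Otimes>\<^sub>M \<nu>)" and mu_eq: "distr \<pi> \<mu> fst = \<mu>" and nu_eq: "distr \<pi> \<nu> snd = \<nu>"
    using pi unfolding couplings_def by auto
  have sp2: "sets \<pi> = sets (borel :: ('a \<times> 'a) measure)"
    unfolding sp borel_prod[symmetric] by (rule sets_pair_measure_cong[OF sm sn])
  have Tc: "continuous_on UNIV T" by (rule lipschitz_on_continuous_on[OF lip])
  have Tm: "T \<in> borel_measurable borel" by (rule borel_measurable_continuous_onI[OF Tc])
  have Tmu: "T \<in> measurable \<mu> borel"
    by (subst measurable_cong_sets[OF sm refl]) (rule Tm)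
  have fstm: "fst \<in> measurable \<pi> \<mu>"
    by (subst measurable_cong_sets[OF sp refl]) (rule measurable_fst)
  have sndm: "snd \<in> measurable \<pi> \<nu>"
    by (subst measurable_cong_sets[OF sp refl]) (rule measurable_snd)
  have pp: "prob_space \<pi>"
    by (rule prob_space_distrD[OF fstm]) (simp add: mu_eq pm)
  then have fp: "finite_measure \<pi>" by (simp add: prob_space_def)
  have fm: "finite_measure \<mu>" using pm by (simp add: prob_space_def)
  define M where "M = norm (T 0) + L"
  have TM: "norm (T x) \<le> M" if "x \<in> cball 0 1" for x
  proof -
    have "norm (T x - T 0) \<le> L * norm (x - 0)"
      using lip unfolding lipschitz_on_def by (metis UNIV_I dist_norm)
    also have "\<dots> \<le> L" using that Lpos by (simp add: mult_left_le)
    finally show ?thesis unfolding M_def using norm_triangle_ineq2[of "T x" "T 0"] by simp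
  qed
  have aeT: "AE x in \<mu>. T x \<in> cball 0 M" using supp by eventually_elim (use TM in simp)
  have aenu: "AE y in \<nu>. y \<in> cball 0 M"
    unfolding push[symmetric] by (subst AE_distr_iff[OF Tmu]) (use aeT in auto)
  have spm: "space \<mu> = UNIV" using sets_eq_imp_space_eq[OF sm] by simp
  have spn: "space \<nu> = UNIV" using sets_eq_imp_space_eq[OF sn] by simp
  have spp: "space \<pi> = UNIV" using sets_eq_imp_space_eq[OF sp2] by simp
  have "AE x in distr \<pi> \<mu> fst. x \<in> cball 0 1" by (subst mu_eq) (rule supp)
  then have ae1: "AE z in \<pi>. fst z \<in> cball 0 1"
    by (subst (asm) AE_distr_iff[OF fstm]) (auto simp: spm sm)
  have "AE x in distr \<pi> \<nu> snd. x \<in> cball 0 M" by (subst nu_eq) (rule aenu)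
  then have ae2: "AE z in \<pi>. snd z \<in> cball 0 M"
    by (subst (asm) AE_distr_iff[OF sndm]) (auto simp: spn sn)
  have aeK: "AE z in \<pi>. z \<in> cball 0 1 \<times> cball 0 M"
    using ae1 ae2 by eventually_elim (auto simp: mem_Times_iff)
  have K: "compact (cball (0::'a) 1 \<times> cball (0::'a) M)" by (intro compact_Times compact_cball)
  have M0: "M \<ge> 0" unfolding M_def using Lpos by simp
  define R where "R = 1 + 2 * M / L"
  have R0: "R \<ge> 0" unfolding R_def using M0 Lpos by simp
  define \<psi> where "\<psi> y = (SUP z\<in>cball 0 R. z \<bullet> y - \<phi> z)" for y
  have psic: "continuous_on UNIV \<psi>" unfolding \<psi>_def by (rule psi_lip[OF cvx d R0])
  define h where "h y = (norm y)\<^sup>2 / 2 - \<psi> y" for y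
  have hc: "continuous_on UNIV h" unfolding h_def by (intro continuous_intros psic) auto
  have hm: "h \<in> borel_measurable borel" by (rule borel_measurable_continuous_onI[OF hc])
  have cc: "continuous_on UNIV (\<lambda>z::'a\<times>'a. qcost (fst z) (snd z))"
    unfolding qcost_def by (intro continuous_intros)
  have c1c: "continuous_on UNIV (\<lambda>x. qcost x (T x))"
    unfolding qcost_def by (intro continuous_intros Tc)
  have Tc2: "continuous_on UNIV (\<lambda>x. h (T x))"
    by (rule continuous_on_compose2[OF hc Tc]) auto
  have c1c': "continuous_on UNIV (\<lambda>z::'a\<times>'a. qcost (fst z) (T (fst z)))"
    by (rule continuous_on_compose2[OF c1c continuous_on_fst[OF continuous_on_id]]) auto
  have hyc: "continuous_on UNIV (\<lambda>z::'a\<times>'a. h (snd z))"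
    by (rule continuous_on_compose2[OF hc continuous_on_snd[OF continuous_on_id]]) auto
  have hTc: "continuous_on UNIV (\<lambda>z::'a\<times>'a. h (T (fst z)))"
    by (rule continuous_on_compose2[OF Tc2 continuous_on_fst[OF continuous_on_id]]) auto
  have Tfc: "continuous_on UNIV (\<lambda>z::'a\<times>'a. T (fst z))"
    by (rule continuous_on_compose2[OF Tc continuous_on_fst[OF continuous_on_id]]) auto
  have uc: "continuous_on UNIV (\<lambda>z::'a\<times>'a. (norm (snd z - T (fst z)))\<^sup>2)"
    by (intro continuous_intros Tfc)
  have I1: "integrable \<pi> (\<lambda>z. qcost (fst z) (snd z))" by (rule integrable_cont[OF fp sp2 cc K aeK])
  have I2: "integrable \<pi> (\<lambda>z. qcost (fst z) (T (fst z)))" by (rule integrable_cont[OF fp sp2 c1c' K aeK])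
  have I3: "integrable \<pi> (\<lambda>z. h (snd z))" by (rule integrable_cont[OF fp sp2 hyc K aeK])
  have I4: "integrable \<pi> (\<lambda>z. h (T (fst z)))" by (rule integrable_cont[OF fp sp2 hTc K aeK])
  have I5: "integrable \<pi> (\<lambda>z. (norm (snd z - T (fst z)))\<^sup>2)" by (rule integrable_cont[OF fp sp2 uc K aeK])
  have Imu: "integrable \<mu> (\<lambda>x. qcost x (T x))"
    by (rule integrable_cont[OF fm sm c1c compact_cball supp])
  have bdd: "\<And>y. bdd_above ((\<lambda>z. z \<bullet> y - \<phi> z) ` cball 0 R)" by (rule psi_bdd[OF cvx d])
  have ident: "qcost x y - qcost x t = (norm y)\<^sup>2 / 2 - (norm t)\<^sup>2 / 2 - x \<bullet> y + x \<bullet> t" for x y t :: 'a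
    by (simp add: qcost_def power2_norm_eq_inner inner_diff_left inner_diff_right inner_commute algebra_simps)
  have pw: "AE z in \<pi>. (norm (snd z - T (fst z)))\<^sup>2 / (2 * L)
      \<le> qcost (fst z) (snd z) - qcost (fst z) (T (fst z)) - h (snd z) + h (T (fst z))"
    using aeK
  proof eventually_elim
    case (elim z)
    obtain x y where z: "z = (x, y)" by (cases z)
    have x: "norm x \<le> 1" and y: "norm y \<le> M" using elim z by auto
    have Tx: "norm (T x) \<le> M" using TM x by simp
    have g: "x \<bullet> y - \<phi> x + (norm (y - T x))\<^sup>2 / (2 * L) \<le> \<psi> y"
      unfolding \<psi>_def by (rule psi_gap[OF cvx d lip Lpos R_def x Tx y bdd])
    have u: "\<psi> (T x) \<le> x \<bullet> T x - \<phi> x" unfolding \<psi>_def by (rule psi_upper[OF cvx d R0])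
    show ?case using g u ident[of x y "T x"] unfolding z h_def by simp
  qed
  have hmn: "h \<in> borel_measurable \<nu>" by (subst measurable_cong_sets[OF sn refl]) (rule hm)
  have hTm: "(\<lambda>x. h (T x)) \<in> borel_measurable \<mu>"
    by (subst measurable_cong_sets[OF sm refl]) (rule borel_measurable_continuous_onI[OF Tc2])
  have c1m: "(\<lambda>x. qcost x (T x)) \<in> borel_measurable \<mu>"
    by (subst measurable_cong_sets[OF sm refl]) (rule borel_measurable_continuous_onI[OF c1c])
  have e1: "(\<integral>z. qcost (fst z) (T (fst z)) \<partial>\<pi>) = (\<integral>x. qcost x (T x) \<partial>\<mu>)"
    using integral_distr[OF fstm c1m] by (simp add: mu_eq)
  have e2: "(\<integral>z. h (snd z) \<partial>\<pi>) = (\<integral>z. h (T (fst z)) \<partial>\<pi>)"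
  proof -
    have "(\<integral>z. h (snd z) \<partial>\<pi>) = (\<integral>y. h y \<partial>\<nu>)"
      using integral_distr[OF sndm hmn] by (simp add: nu_eq)
    also have "\<dots> = (\<integral>x. h (T x) \<partial>\<mu>)"
      using integral_distr[OF Tmu hm] by (simp add: push)
    also have "\<dots> = (\<integral>z. h (T (fst z)) \<partial>\<pi>)"
      using integral_distr[OF fstm hTm] by (simp add: mu_eq)
    finally show ?thesis .
  qed
  have "(\<integral>z. (norm (snd z - T (fst z)))\<^sup>2 \<partial>\<pi>) / (2 * L) = (\<integral>z. (norm (snd z - T (fst z)))\<^sup>2 / (2 * L) \<partial>\<pi>)"
    by simp
  also have "\<dots> \<le> (\<integral>z. qcost (fst z) (snd z) - qcost (fst z) (T (fst z)) - h (snd z) + h (T (fst z)) \<partial>\<pi>)"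
    by (rule integral_mono_AE[OF _ _ pw]) (use I1 I2 I3 I4 I5 in auto)
  also have "\<dots> = (\<integral>z. qcost (fst z) (snd z) \<partial>\<pi>) - (\<integral>z. qcost (fst z) (T (fst z)) \<partial>\<pi>)
      - (\<integral>z. h (snd z) \<partial>\<pi>) + (\<integral>z. h (T (fst z)) \<partial>\<pi>)"
    using I1 I2 I3 I4 by simp
  also have "\<dots> = (\<integral>z. qcost (fst z) (snd z) \<partial>\<pi>) - (\<integral>x. qcost x (T x) \<partial>\<mu>)"
    using e1 e2 by simp
  finally show "(\<integral>z. (norm (snd z - T (fst z)))\<^sup>2 \<partial>\<pi>) / (2 * L)
       \<le> (\<integral>z. qcost (fst z) (snd z) \<partial>\<pi>) - (\<integral>x. qcost x (T x) \<partial>\<mu>)" .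
  show "integrable \<pi> (\<lambda>z. qcost (fst z) (snd z))" by (rule I1)
  show "integrable \<mu> (\<lambda>x. qcost x (T x))" by (rule Imu)
  show "integrable \<pi> (\<lambda>z. (norm (snd z - T (fst z)))\<^sup>2)" by (rule I5)
qed

theorem theorem3p9:
  fixes \<mu> \<nu> :: "'a::euclidean_space measure"
    and \<Omega> :: "'a set" and \<rho>\<^sub>\<mu> :: "'a \<Rightarrow> real" and g\<^sub>\<nu> :: "'a \<Rightarrow> ennreal"
    and lo\<^sub>\<mu> hi\<^sub>\<mu> hi\<^sub>\<nu> L C :: real
    and \<phi> :: "'a \<Rightarrow> real" and T :: "'a \<Rightarrow> 'a"
  assumes prob_mu: "prob_space \<mu>" and prob_nu: "prob_space \<nu>"
    and Omega: "open \<Omega>" "bounded \<Omega>" "connected \<Omega>" "lipschitz_domain \<Omega>" "\<Omega> \<subseteq> ball 0 1"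
    and rho_meas: "\<rho>\<^sub>\<mu> \<in> borel_measurable borel"
    and mu_def: "\<mu> = density lborel (\<lambda>x. ennreal (\<rho>\<^sub>\<mu> x * indicator \<Omega> x))"
    and rho_bounds: "0 < lo\<^sub>\<mu>" "lo\<^sub>\<mu> \<le> hi\<^sub>\<mu>"
      "AE x in lborel. x \<in> \<Omega> \<longrightarrow> lo\<^sub>\<mu> \<le> \<rho>\<^sub>\<mu> x \<and> \<rho>\<^sub>\<mu> x \<le> hi\<^sub>\<mu>"
    and g_meas: "g\<^sub>\<nu> \<in> borel_measurable borel"
    and nu_def: "\<nu> = density lborel g\<^sub>\<nu>"
    and nu_spt: "spt \<nu> \<subseteq> ball 0 1"
    and nu_dens_bound: "AE y in lborel. y \<in> spt \<nu> \<longrightarrow> g\<^sub>\<nu> y \<le> ennreal hi\<^sub>\<nu>"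
    and phi_convex: "convex_on UNIV \<phi>"
    and T_grad: "\<And>x. (\<phi> has_derivative (\<lambda>h. T x \<bullet> h)) (at x)"
    and T_push: "distr \<mu> borel T = \<nu>"
    and T_lip: "L-lipschitz_on UNIV T"
    and C_pos: "C > 0"
    and C_val: "\<And>\<epsilon>. \<epsilon> \<in> {0<..1} \<Longrightarrow>
        (1 / C) * \<epsilon> powr (2 / (2 + real DIM('a))) \<le> Delta \<epsilon> \<mu> \<nu> \<and>
        Delta \<epsilon> \<mu> \<nu> \<le> C * \<epsilon> powr (2 / (2 + real DIM('a)))"
  shows "\<forall>\<epsilon> \<pi>. \<epsilon> \<in> {0<..1} \<and> is_qot_optimizer \<epsilon> \<mu> \<nu> \<pi> \<longrightarrow>
           (\<forall>t>0. measure \<pi> {(x, y). norm (y - T x) \<ge> t}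
                    \<le> 2 * L * C / t\<^sup>2 * \<epsilon> powr (2 / (real DIM('a) + 2))) \<and>
           (\<forall>\<eta>\<in>{0<..<1}. measure \<pi> {(x, y). norm (y - T x)
                    \<le> sqrt (2 * L * C) * \<eta> powr (-1/2) * \<epsilon> powr (1 / (real DIM('a) + 2))}
                    \<ge> 1 - \<eta>)"
proof (intro allI impI)
  fix \<epsilon> :: real and \<pi> :: "('a \<times> 'a) measure"
  assume H: "\<epsilon> \<in> {0<..1} \<and> is_qot_optimizer \<epsilon> \<mu> \<nu> \<pi>"
  have eps: "0 < \<epsilon>" "\<epsilon> \<le> 1" using H by auto
  have opt: "\<pi> \<in> qot_admissible \<mu> \<nu>" "qot_obj \<epsilon> \<mu> \<nu> \<pi> = QOT \<epsilon> \<mu> \<nu>"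
    using H unfolding is_qot_optimizer_def by auto
  have pi: "\<pi> \<in> couplings \<mu> \<nu>" using opt unfolding qot_admissible_def by auto
  have sm: "sets \<mu> = sets borel" by (simp add: mu_def)
  have sn: "sets \<nu> = sets borel" by (simp add: nu_def)
  have spm: "space \<mu> = UNIV" using sets_eq_imp_space_eq[OF sm] by simp
  have spn: "space \<nu> = UNIV" using sets_eq_imp_space_eq[OF sn] by simp
  have sp: "sets \<pi> = sets (\<mu> \<Otimes>\<^sub>M \<nu>)" using pi unfolding couplings_def by auto
  have sp2: "sets \<pi> = sets (borel :: ('a \<times> 'a) measure)"
    unfolding sp borel_prod[symmetric] by (rule sets_pair_measure_cong[OF sm sn])
  have spp: "space \<pi> = UNIV" using sets_eq_imp_space_eq[OF sp2] by simp
  have mu_eq: "distr \<pi> \<mu> fst = \<mu>" using pi unfolding couplings_def by auto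
  have fstm: "fst \<in> measurable \<pi> \<mu>"
    by (subst measurable_cong_sets[OF sp refl]) (rule measurable_fst)
  have pp: "prob_space \<pi>"
    by (rule prob_space_distrD[OF fstm]) (simp add: mu_eq prob_mu)
  have Om: "\<Omega> \<in> sets borel" using Omega(1) by (rule borel_open)
  have fm: "(\<lambda>x. ennreal (\<rho>\<^sub>\<mu> x * indicator \<Omega> x)) \<in> borel_measurable lborel"
    using rho_meas Om by measurable
  have supp: "AE x in \<mu>. x \<in> cball 0 1"
    unfolding mu_def
  proof (subst AE_density[OF fm], rule AE_I2, intro impI)
    fix x assume "0 < ennreal (\<rho>\<^sub>\<mu> x * indicator \<Omega> x)"
    then have "x \<in> \<Omega>" by (cases "x \<in> \<Omega>") auto
    then show "x \<in> cball 0 1" using Omega(5) by auto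
  qed
  have L0: "0 \<le> L" using T_lip lipschitz_on_nonneg by blast
  have Tc: "continuous_on UNIV T" by (rule lipschitz_on_continuous_on[OF T_lip])
  have Tm: "T \<in> borel_measurable borel" by (rule borel_measurable_continuous_onI[OF Tc])
  define p where "p = 2 / (real DIM('a) + 2)"
  have p2: "2 / (2 + real DIM('a)) = p" unfolding p_def by (simp add: add.commute)
  have ep: "\<epsilon> powr p > 0" using eps by simp
  have Dl: "(1 / C) * \<epsilon> powr p \<le> Delta \<epsilon> \<mu> \<nu>" and Du: "Delta \<epsilon> \<mu> \<nu> \<le> C * \<epsilon> powr p"
    using C_val[of \<epsilon>] eps p2 by auto
  have Dpos: "Delta \<epsilon> \<mu> \<nu> > 0" using Dl ep C_pos by (smt (verit) divide_pos_pos mult_pos_pos)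
  have Qfin: "QOT \<epsilon> \<mu> \<nu> < top"
  proof (rule ccontr)
    assume "\<not> QOT \<epsilon> \<mu> \<nu> < top"
    then have "QOT \<epsilon> \<mu> \<nu> = top" using top.not_eq_extremum by blast
    then have "Delta \<epsilon> \<mu> \<nu> \<le> 0" unfolding Delta_def by simp
    then show False using Dpos by simp
  qed
  have Tmn: "T \<in> measurable \<mu> \<nu>"
    by (subst measurable_cong_sets[OF sm sn]) (rule Tm)
  have pairm: "(\<lambda>x. (x, T x)) \<in> measurable \<mu> (\<mu> \<Otimes>\<^sub>M \<nu>)"
    by (rule measurable_Pair[OF measurable_ident_sets[OF refl] Tmn])
  define \<gamma> where "\<gamma> = distr \<mu> (\<mu> \<Otimes>\<^sub>M \<nu>) (\<lambda>x. (x, T x))"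
  have g1: "distr \<gamma> \<mu> fst = \<mu>"
    unfolding \<gamma>_def by (subst distr_distr[OF measurable_fst pairm]) (simp add: o_def)
  have g2: "distr \<gamma> \<nu> snd = \<nu>"
  proof -
    have "distr \<gamma> \<nu> snd = distr \<mu> \<nu> T"
      unfolding \<gamma>_def by (subst distr_distr[OF measurable_snd pairm]) (simp add: o_def)
    also have "\<dots> = distr \<mu> borel T" by (rule distr_cong[OF refl sn]) simp
    finally show ?thesis using T_push by simp
  qed
  have gc: "\<gamma> \<in> couplings \<mu> \<nu>" unfolding couplings_def using g1 g2 by (simp add: \<gamma>_def)
  have cm: "(\<lambda>z. qcost (fst z) (snd z)) \<in> borel_measurable (\<mu> \<Otimes>\<^sub>M \<nu>)"
  proof -
    have "continuous_on UNIV (\<lambda>z::'a\<times>'a. qcost (fst z) (snd z))"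
      unfolding qcost_def by (intro continuous_intros)
    then have "(\<lambda>z::'a\<times>'a. qcost (fst z) (snd z)) \<in> borel_measurable borel"
      by (rule borel_measurable_continuous_onI)
    then show ?thesis
      by (subst measurable_cong_sets[OF sets_pair_measure_cong[OF sm sn] refl]) (simp add: borel_prod)
  qed
  then have cme: "(\<lambda>z. ennreal (qcost (fst z) (snd z))) \<in> borel_measurable (\<mu> \<Otimes>\<^sub>M \<nu>)"
    by measurable
  have qnn: "0 \<le> qcost x y" for x y :: 'a unfolding qcost_def by simp
  have cont_main: "(\<integral>z. (norm (snd z - T (fst z)))\<^sup>2 \<partial>\<pi>) / (2 * L') \<le> C * \<epsilon> powr p"
    if L': "L' > L" for L'
  proof -
    have L'pos: "L' > 0" using L' L0 by simp
    have lip': "L'-lipschitz_on UNIV T" by (rule lipschitz_on_mono[OF T_lip]) (use L' in auto)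
    note co = core[OF sm sn prob_mu supp phi_convex T_grad T_push lip' L'pos pi]
    have "enn2real (OT \<mu> \<nu>) \<le> (\<integral>x. qcost x (T x) \<partial>\<mu>)"
    proof -
      have "OT \<mu> \<nu> \<le> (\<integral>\<^sup>+ z. ennreal (qcost (fst z) (snd z)) \<partial>\<gamma>)"
        unfolding OT_def by (rule INF_lower[OF gc])
      also have "\<dots> = (\<integral>\<^sup>+ x. ennreal (qcost x (T x)) \<partial>\<mu>)"
      proof -
        have cme': "(\<lambda>z. ennreal (qcost (fst z) (snd z))) \<in> borel_measurable (distr \<mu> (\<mu> \<Otimes>\<^sub>M \<nu>) (\<lambda>x. (x, T x)))"
          by (subst measurable_cong_sets[OF sets_distr refl]) (rule cme)
        show ?thesis unfolding \<gamma>_def by (subst nn_integral_distr[OF pairm cme']) simp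
      qed
      also have "\<dots> = ennreal (\<integral>x. qcost x (T x) \<partial>\<mu>)"
        by (rule nn_integral_eq_integral[OF co(2)]) (simp add: qnn)
      finally have le: "OT \<mu> \<nu> \<le> ennreal (\<integral>x. qcost x (T x) \<partial>\<mu>)" .
      have "enn2real (OT \<mu> \<nu>) \<le> enn2real (ennreal (\<integral>x. qcost x (T x) \<partial>\<mu>))"
        by (rule enn2real_mono[OF le]) simp
      also have "\<dots> = (\<integral>x. qcost x (T x) \<partial>\<mu>)"
        by (rule enn2real_ennreal) (simp add: integral_nonneg qnn)
      finally show ?thesis .
    qed
    moreover have "(\<integral>z. qcost (fst z) (snd z) \<partial>\<pi>) \<le> enn2real (QOT \<epsilon> \<mu> \<nu>)"
    proof -
      have "ennreal (\<integral>z. qcost (fst z) (snd z) \<partial>\<pi>) = (\<integral>\<^sup>+ z. ennreal (qcost (fst z) (snd z)) \<partial>\<pi>)"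
        by (rule nn_integral_eq_integral[OF co(1), symmetric]) (simp add: qnn)
      also have "\<dots> \<le> qot_obj \<epsilon> \<mu> \<nu> \<pi>" unfolding qot_obj_def by simp
      also have "\<dots> = QOT \<epsilon> \<mu> \<nu>" by (rule opt(2))
      finally have "ennreal (\<integral>z. qcost (fst z) (snd z) \<partial>\<pi>) \<le> QOT \<epsilon> \<mu> \<nu>" .
      then have "enn2real (ennreal (\<integral>z. qcost (fst z) (snd z) \<partial>\<pi>)) \<le> enn2real (QOT \<epsilon> \<mu> \<nu>)"
        by (rule enn2real_mono[OF _ Qfin])
      then show ?thesis by (simp add: integral_nonneg qnn)
    qed
    ultimately show ?thesis using co(4) Du unfolding Delta_def by linarith
  qed
  have lip1: "(L + 1)-lipschitz_on UNIV T" by (rule lipschitz_on_mono[OF T_lip]) auto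
  note co1 = core[OF sm sn prob_mu supp phi_convex T_grad T_push lip1 _ pi]
  have Iint: "integrable \<pi> (\<lambda>z. (norm (snd z - T (fst z)))\<^sup>2)" using co1(3) L0 by simp
  define I where "I = (\<integral>z. (norm (snd z - T (fst z)))\<^sup>2 \<partial>\<pi>)"
  have I0: "I \<ge> 0" unfolding I_def by (simp add: integral_nonneg)
  have Ibd: "I \<le> 2 * L * C * \<epsilon> powr p"
  proof (rule field_le_epsilon)
    fix e :: real assume e: "0 < e"
    define L' where "L' = L + e / (2 * C * \<epsilon> powr p)"
    have pos: "2 * C * \<epsilon> powr p > 0" using C_pos ep by simp
    have L'gt: "L' > L" unfolding L'_def using e pos by simp
    have L'pos: "L' > 0" using L'gt L0 by simp
    have "I / (2 * L') \<le> C * \<epsilon> powr p" unfolding I_def by (rule cont_main[OF L'gt])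
    then have "I \<le> 2 * L' * (C * \<epsilon> powr p)" using L'pos by (simp add: divide_le_eq mult.commute)
    also have "\<dots> = 2 * L * C * \<epsilon> powr p + e" unfolding L'_def using pos C_pos eps(1) by (simp add: field_simps)
    finally show "I \<le> 2 * L * C * \<epsilon> powr p + e" .
  qed
  have fc: "continuous_on UNIV (\<lambda>z::'a\<times>'a. norm (snd z - T (fst z)))"
  proof -
    have "continuous_on UNIV (\<lambda>z::'a\<times>'a. T (fst z))"
      by (rule continuous_on_compose2[OF Tc continuous_on_fst[OF continuous_on_id]]) auto
    then show ?thesis by (intro continuous_intros)
  qed
  have fmeas: "(\<lambda>z. norm (snd z - T (fst z))) \<in> borel_measurable \<pi>"
    by (subst measurable_cong_sets[OF sp2 refl]) (rule borel_measurable_continuous_onI[OF fc])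
  have setm: "{z \<in> space \<pi>. P (norm (snd z - T (fst z)))} \<in> sets \<pi>" if "{r. P r} \<in> sets borel" for P
  proof -
    have "{z \<in> space \<pi>. P (norm (snd z - T (fst z)))} = (\<lambda>z. norm (snd z - T (fst z))) -` {r. P r} \<inter> space \<pi>"
      by auto
    then show ?thesis using measurable_sets[OF fmeas that] by simp
  qed
  have markov: "measure \<pi> {(x, y). norm (y - T x) \<ge> t} \<le> I / t\<^sup>2" if t: "t > 0" for t
  proof -
    have "{(x, y). norm (y - T x) \<ge> t} = {z \<in> space \<pi>. (norm (snd z - T (fst z)))\<^sup>2 \<ge> t\<^sup>2}"
      using t abs_le_square_iff[of t] by (force simp: spp)
    also have "measure \<pi> \<dots> \<le> I / t\<^sup>2" unfolding I_def
      by (rule integral_Markov_inequality_measure[OF Iint, of "{}"]) (use t in auto)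
    finally show ?thesis .
  qed
  have pd: "2 / (real DIM('a) + 2) = p" unfolding p_def ..
  have part1: "\<forall>t>0. measure \<pi> {(x, y). norm (y - T x) \<ge> t} \<le> 2 * L * C / t\<^sup>2 * \<epsilon> powr p"
  proof (intro allI impI)
    fix t :: real assume t: "t > 0"
    have "measure \<pi> {(x, y). norm (y - T x) \<ge> t} \<le> I / t\<^sup>2" by (rule markov[OF t])
    also have "\<dots> \<le> 2 * L * C * \<epsilon> powr p / t\<^sup>2" by (rule divide_right_mono[OF Ibd]) simp
    finally show "measure \<pi> {(x, y). norm (y - T x) \<ge> t} \<le> 2 * L * C / t\<^sup>2 * \<epsilon> powr p" by simp
  qed
  have part2: "measure \<pi> {(x, y). norm (y - T x) \<le> sqrt (2 * L * C) * \<eta> powr (-1/2) * \<epsilon> powr (1 / (real DIM('a) + 2))} \<ge> 1 - \<eta>"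
    if eta: "\<eta> \<in> {0<..<1}" for \<eta>
  proof -
    define s where "s = sqrt (2 * L * C) * \<eta> powr (-1/2) * \<epsilon> powr (1 / (real DIM('a) + 2))"
    have seteq: "{(x, y). norm (y - T x) \<le> s} = {z \<in> space \<pi>. norm (snd z - T (fst z)) \<le> s}"
      by (auto simp: spp)
    have Am: "{z \<in> space \<pi>. norm (snd z - T (fst z)) \<le> s} \<in> sets \<pi>"
      by (rule setm) (simp add: atMost_def[symmetric])
    show ?thesis
    proof (cases "L = 0")
      case True
      then have "I = 0" using Ibd I0 by simp
      then have "AE z in \<pi>. (norm (snd z - T (fst z)))\<^sup>2 = 0"
        using integral_nonneg_eq_0_iff_AE[OF Iint] unfolding I_def by simp
      then have ae: "AE z in \<pi>. norm (snd z - T (fst z)) \<le> s"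
        unfolding s_def True by simp
      have "measure \<pi> {z \<in> space \<pi>. norm (snd z - T (fst z)) \<le> s} = 1"
        using prob_space.prob_Collect_eq_1[OF pp Am] ae by simp
      then show ?thesis unfolding s_def[symmetric] seteq using eta by simp
    next
      case False
      then have Lp: "L > 0" using L0 by simp
      have e1: "(\<epsilon> powr (1 / (real DIM('a) + 2)))\<^sup>2 = \<epsilon> powr p"
      proof -
        have "(\<epsilon> powr (1 / (real DIM('a) + 2)))\<^sup>2 = \<epsilon> powr (1 / (real DIM('a) + 2) + 1 / (real DIM('a) + 2))"
          by (simp only: power2_eq_square powr_add)
        also have "1 / (real DIM('a) + 2) + 1 / (real DIM('a) + 2) = p" unfolding p_def by (simp add: field_simps)
        finally show ?thesis .
      qed
      have e2: "(\<eta> powr (-1/2))\<^sup>2 = 1 / \<eta>"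
      proof -
        have "(\<eta> powr (-1/2))\<^sup>2 = \<eta> powr (-1/2 + -1/2)"
          by (simp only: power2_eq_square powr_add)
        also have "\<dots> = 1 / \<eta>" using eta by (simp add: powr_minus_divide)
        finally show ?thesis .
      qed
      have e3: "(sqrt (2 * L * C))\<^sup>2 = 2 * L * C" using Lp C_pos by simp
      have s2: "s\<^sup>2 = 2 * L * C * \<epsilon> powr p / \<eta>"
        unfolding s_def power_mult_distrib e1 e2 e3 by simp
      have spos: "s > 0" unfolding s_def using Lp C_pos eta eps by simp
      have Bm: "{z \<in> space \<pi>. s \<le> norm (snd z - T (fst z))} \<in> sets \<pi>"
        by (rule setm) (simp add: atLeast_def[symmetric])
      have "1 = measure \<pi> (space \<pi>)" using prob_space.prob_space[OF pp] by simp
      also have "space \<pi> = {z \<in> space \<pi>. norm (snd z - T (fst z)) \<le> s} \<union> {z \<in> space \<pi>. s \<le> norm (snd z - T (fst z))}"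
        by auto
      also have "measure \<pi> \<dots> \<le> measure \<pi> {z \<in> space \<pi>. norm (snd z - T (fst z)) \<le> s}
          + measure \<pi> {z \<in> space \<pi>. s \<le> norm (snd z - T (fst z))}"
        by (rule measure_Un_le[OF Am Bm])
      also have "measure \<pi> {z \<in> space \<pi>. s \<le> norm (snd z - T (fst z))} = measure \<pi> {(x, y). norm (y - T x) \<ge> s}"
        by (rule arg_cong[where f="measure \<pi>"]) (auto simp: spp)
      also have "\<dots> \<le> I / s\<^sup>2" by (rule markov[OF spos])
      also have "\<dots> \<le> 2 * L * C * \<epsilon> powr p / s\<^sup>2" by (rule divide_right_mono[OF Ibd]) simp
      also have "\<dots> = \<eta>" unfolding s2 using Lp C_pos ep eta by (simp add: field_simps)
      finally show ?thesis unfolding s_def[symmetric] seteq by simp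
    qed
  qed
  show "(\<forall>t>0. measure \<pi> {(x, y). norm (y - T x) \<ge> t}
                    \<le> 2 * L * C / t\<^sup>2 * \<epsilon> powr (2 / (real DIM('a) + 2))) \<and>
           (\<forall>\<eta>\<in>{0<..<1}. measure \<pi> {(x, y). norm (y - T x)
                    \<le> sqrt (2 * L * C) * \<eta> powr (-1/2) * \<epsilon> powr (1 / (real DIM('a) + 2))}
                    \<ge> 1 - \<eta>)"
    unfolding pd using part1 part2 by blast
qed

end
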